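(* Let $(a_k)_{k\geqslant1}$ be a sequence of complex numbers such that \[ A(n)=\sum_{k\leqslant n}a_k\left[\frac{n}{k}\right]=Cn+o(n)\quad\text{as } n\to\infty \] for some constant $C\in\mathbb{C}$. Then \[ S(n)=\sum_{k\leqslant n}a_k\left[\frac{n}{k}\right]\log k=o(n\log n)\quad\text{as } n\to\infty. \]
   Context: $[x]$ denotes the integer part of a real number $x$. *)

theory Defs
  imports "HOL-Analysis.Analysis" "HOL-Library.Landau_Symbols"
begin

end

theory Submission
  imports Defs "HOL-Number_Theory.Number_Theory"
begin

lemma Suc_div_split:
  assumes "k > 0"
  shows "Suc n div k = n div k + (if k dvd Suc n then 1 else 0)"
  using assms by (simp add: div_Suc dvd_eq_mod_eq_0)

lemma L1:
  fixes h :: "nat \<Rightarrow> nat \<Rightarrow> 'b::comm_monoid_add"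
  shows "(\<Sum>k=1..Suc n. \<Sum>j=1..Suc n div k. h k j) =
         (\<Sum>k=1..n. \<Sum>j=1..n div k. h k j) + (\<Sum>k\<in>{k. k dvd Suc n}. h k (Suc n div k))"
proof -
  have step: "(\<Sum>j=1..Suc n div k. h k j) = (\<Sum>j=1..n div k. h k j) +
      (if k dvd Suc n then h k (Suc n div k) else 0)" if "k \<ge> 1" for k
  proof (cases "k dvd Suc n")
    case True
    then have "Suc n div k = Suc (n div k)" using Suc_div_split[of k n] that by simp
    then show ?thesis using True by simp
  next
    case False
    then have "Suc n div k = n div k" using Suc_div_split[of k n] that by simp
    then show ?thesis using False by simp
  qed
  have "(\<Sum>k=1..Suc n. \<Sum>j=1..Suc n div k. h k j) =
     (\<Sum>k=1..Suc n. (\<Sum>j=1..n div k. h k j) + (if k dvd Suc n then h k (Suc n div k) else 0))"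
    by (intro sum.cong refl) (rule step, simp)
  also have "\<dots> = (\<Sum>k=1..Suc n. (\<Sum>j=1..n div k. h k j)) + (\<Sum>k=1..Suc n. if k dvd Suc n then h k (Suc n div k) else 0)"
    by (rule sum.distrib)
  also have "(\<Sum>k=1..Suc n. (\<Sum>j=1..n div k. h k j)) = (\<Sum>k=1..n. (\<Sum>j=1..n div k. h k j))"
    by simp
  also have "(\<Sum>k=1..Suc n. if k dvd Suc n then h k (Suc n div k) else 0) =
      (\<Sum>k\<in>{k\<in>{1..Suc n}. k dvd Suc n}. h k (Suc n div k))"
    by (rule sum.inter_filter[symmetric], simp)
  also have "{k\<in>{1..Suc n}. k dvd Suc n} = {k. k dvd Suc n}"
  proof (intro equalityI subsetI)
    fix x assume "x \<in> {k\<in>{1..Suc n}. k dvd Suc n}" then show "x \<in> {k. k dvd Suc n}" by simp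
  next
    fix x assume "x \<in> {k. k dvd Suc n}"
    then have d: "x dvd Suc n" by simp
    then have "x \<noteq> 0" by (intro notI) simp
    moreover have "x \<le> Suc n" using d by (rule dvd_imp_le) simp
    ultimately show "x \<in> {k\<in>{1..Suc n}. k dvd Suc n}" using d by simp
  qed
  finally show ?thesis .
qed

lemma sum_swap_div:
  fixes g :: "nat \<Rightarrow> nat \<Rightarrow> 'b::comm_monoid_add"
  shows "(\<Sum>k=1..n. \<Sum>d=1..n div k. g k d) = (\<Sum>d=1..n. \<Sum>k=1..n div d. g k d)"
proof -
  have e: "(\<Sum>d=1..n div k. f d) = (\<Sum>d=1..n. if k * d \<le> n then f d else 0)"
    if "k \<ge> 1" for k and f :: "nat \<Rightarrow> 'b"
  proof -
    have "(\<Sum>d=1..n. if k * d \<le> n then f d else 0) = (\<Sum>d\<in>{d\<in>{1..n}. k*d \<le> n}. f d)"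
      by (rule sum.inter_filter[symmetric], simp)
    also have "{d\<in>{1..n}. k*d \<le> n} = {1..n div k}"
    proof (intro equalityI subsetI)
      fix x assume "x \<in> {d\<in>{1..n}. k*d \<le> n}"
      then show "x \<in> {1..n div k}" using that by (auto simp: less_eq_div_iff_mult_less_eq mult.commute)
    next
      fix x assume "x \<in> {1..n div k}"
      then have "x \<ge> 1" "x * k \<le> n" using that by (auto simp: less_eq_div_iff_mult_less_eq)
      moreover have "x * 1 \<le> x * k" using that by (intro mult_le_mono2)
      ultimately have "x \<le> n" by linarith
      with \<open>x \<ge> 1\<close> \<open>x * k \<le> n\<close> show "x \<in> {d\<in>{1..n}. k*d \<le> n}" by (simp add: mult.commute)
    qed
    finally show ?thesis by simp
  qed
  have "(\<Sum>k=1..n. \<Sum>d=1..n div k. g k d) = (\<Sum>k=1..n. \<Sum>d=1..n. if k * d \<le> n then g k d else 0)"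
    by (rule sum.cong[OF refl], rule e, simp)
  also have "\<dots> = (\<Sum>d=1..n. \<Sum>k=1..n. if k * d \<le> n then g k d else 0)"
    by (rule sum.swap)
  also have "\<dots> = (\<Sum>d=1..n. \<Sum>k=1..n div d. g k d)"
    apply (rule sum.cong[OF refl])
    subgoal for d using e[of d "\<lambda>k. g k d"] by (simp add: mult.commute)
    done
  finally show ?thesis .
qed

lemma L1_induct:
  fixes h :: "nat \<Rightarrow> nat \<Rightarrow> 'b::comm_monoid_add"
  assumes "\<And>n. (\<Sum>k\<in>{k. k dvd Suc n}. h k (Suc n div k)) = f (Suc n)"
  shows "(\<Sum>k=1..n. \<Sum>j=1..n div k. h k j) = (\<Sum>m=1..n. f m)"
proof (induction n)
  case 0 then show ?case by simp
next
  case (Suc n)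
  show ?case unfolding L1 Suc assms by simp
qed

definition LF :: "nat \<Rightarrow> real" where "LF N = (\<Sum>j=1..N. ln (real j))"
definition psi :: "nat \<Rightarrow> real" where "psi N = (\<Sum>d=1..N. mangoldt d)"

lemma cheb_id: "(\<Sum>d=1..N. mangoldt d * real (N div d)) = LF N"
proof -
  have "(\<Sum>d=1..N. mangoldt d * real (N div d)) = (\<Sum>d=1..N. \<Sum>j=1..N div d. (mangoldt d :: real))"
    by (simp add: mult.commute)
  also have "\<dots> = (\<Sum>m=1..N. ln (real m))"
  proof (rule L1_induct)
    fix n
    show "(\<Sum>k\<in>{k. k dvd Suc n}. (mangoldt k :: real)) = ln (real (Suc n))"
      using mangoldt_sum[of "Suc n", where 'a = real] by simp
  qed
  finally show ?thesis by (simp add: LF_def)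
qed

lemma LF_fact: "LF N = ln (fact N)"
proof (induction N)
  case 0 then show ?case by (simp add: LF_def)
next
  case (Suc N)
  have "LF (Suc N) = LF N + ln (real (Suc N))" by (simp add: LF_def)
  also have "\<dots> = ln (fact N) + ln (real (Suc N))" using Suc by simp
  also have "\<dots> = ln (real (Suc N) * fact N)"
    by (subst ln_mult) auto
  also have "real (Suc N) * fact N = fact (Suc N)" by simp
  finally show ?case .
qed

lemma LF_le: "LF N \<le> real N * ln (real N)"
proof -
  have "LF N \<le> real (card {1..N}) * ln (real N)"
    unfolding LF_def by (rule sum_bounded_above) auto
  then show ?thesis by simp
qed

lemma fact_central: "(fact n :: real) \<le> (real n + 1) * 2 ^ n * (fact (n div 2))^2"
proof -
  define m where "m = n div 2"
  have mn: "m \<le> n" by (simp add: m_def)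
  have f: "fact m * fact (n - m) * (n choose m) = (fact n :: nat)"
    by (rule binomial_fact_lemma[OF mn])
  have g: "fact (n - m) \<le> (n + 1) * (fact m :: nat)"
  proof (cases "n - m = m")
    case True then show ?thesis by simp
  next
    case False
    then have "n - m = Suc m" unfolding m_def by presburger
    then have "fact (n - m) = Suc m * (fact m :: nat)" by simp
    also have "\<dots> \<le> (n + 1) * fact m" using mn by (intro mult_le_mono1) simp
    finally show ?thesis .
  qed
  have "(fact n :: nat) \<le> fact m * ((n + 1) * fact m) * 2 ^ n"
    unfolding f[symmetric] by (intro mult_le_mono g binomial_le_pow2 order.refl)
  also have "\<dots> = (n + 1) * 2 ^ n * (fact m)^2" by (simp add: power2_eq_square algebra_simps)
  finally have "real (fact n) \<le> real ((n + 1) * 2 ^ n * (fact m)^2)" by (rule of_nat_mono)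
  then show ?thesis unfolding m_def
    by (simp only: of_nat_mult of_nat_power of_nat_fact of_nat_add of_nat_1 of_nat_numeral)
qed

lemma LF_central: "LF n \<le> 2 * LF (n div 2) + real n * ln 2 + ln (real n + 1)"
proof -
  have pos: "(fact k :: real) > 0" for k by simp
  have "LF n = ln (fact n)" by (rule LF_fact)
  also have "\<dots> \<le> ln ((real n + 1) * 2 ^ n * (fact (n div 2))^2)"
    using fact_central[of n] by (subst ln_le_cancel_iff) auto
  also have "\<dots> = ln (real n + 1) + real n * ln 2 + 2 * ln (fact (n div 2))"
    by (simp add: ln_mult ln_realpow)
  finally show ?thesis by (simp add: LF_fact)
qed

lemma psi_step: "psi n \<le> psi (n div 2) + real n * ln 2 + ln (real n + 1)"
proof -
  define m where "m = n div 2"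
  have mn: "m \<le> n" by (simp add: m_def)
  have psim: "psi m = (\<Sum>d=1..n. if d \<le> m then mangoldt d else 0)"
  proof -
    have "psi m = (\<Sum>d=1..m. if d \<le> m then mangoldt d else 0)"
      unfolding psi_def by (rule sum.cong) auto
    also have "\<dots> = (\<Sum>d=1..n. if d \<le> m then mangoldt d else 0)"
      by (rule sum.mono_neutral_left) (use mn in auto)
    finally show ?thesis .
  qed
  have LFm: "LF m = (\<Sum>d=1..n. mangoldt d * real (m div d))"
  proof -
    have "LF m = (\<Sum>d=1..m. mangoldt d * real (m div d))" by (rule cheb_id[symmetric])
    also have "\<dots> = (\<Sum>d=1..n. mangoldt d * real (m div d))"
      by (rule sum.mono_neutral_left) (use mn in auto)
    finally show ?thesis .
  qed
  have tm: "mangoldt d - (if d \<le> m then mangoldt d else 0)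
      \<le> mangoldt d * real (n div d) - 2 * (mangoldt d * real (m div d))"
    if d: "d \<in> {1..n}" for d
  proof -
    have Lnn: "(mangoldt d :: real) \<ge> 0" by (rule mangoldt_nonneg)
    have "m div d * d \<le> m" by simp
    then have "2 * (m div d) * d \<le> n" unfolding m_def by linarith
    then have le: "2 * (m div d) \<le> n div d"
      using d by (subst less_eq_div_iff_mult_less_eq) auto
    show ?thesis
    proof (cases "d \<le> m")
      case True
      have "real (2 * (m div d)) \<le> real (n div d)" using le by (rule of_nat_mono)
      then have "0 \<le> mangoldt d * (real (n div d) - 2 * real (m div d))"
        using Lnn by (intro mult_nonneg_nonneg) auto
      then show ?thesis using True by (simp add: algebra_simps)
    next
      case False
      then have "m div d = 0" by simp
      moreover have "n div d \<ge> 1" using d by (auto simp: less_eq_div_iff_mult_less_eq)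
      ultimately show ?thesis using False Lnn
        by (simp add: mult_le_cancel_left1)
    qed
  qed
  have "psi n - psi m \<le> LF n - 2 * LF m"
  proof -
    have "psi n - psi m = (\<Sum>d=1..n. mangoldt d - (if d \<le> m then mangoldt d else 0))"
      by (simp only: psim) (simp add: psi_def sum_subtractf)
    also have "\<dots> \<le> (\<Sum>d=1..n. mangoldt d * real (n div d) - 2 * (mangoldt d * real (m div d)))"
      by (rule sum_mono) (rule tm)
    also have "\<dots> = LF n - 2 * LF m"
      by (simp only: LFm) (simp add: cheb_id[symmetric] sum_subtractf sum_distrib_left)
    finally show ?thesis .
  qed
  with LF_central[of n] show ?thesis unfolding m_def by linarith
qed

lemma psi_bound: "psi n \<le> 4 * real n"
proof (induction n rule: less_induct)
  case (less n)
  show ?case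
  proof (cases "n = 0")
    case True then show ?thesis by (simp add: psi_def)
  next
    case False
    then have "n div 2 < n" by simp
    then have IH: "psi (n div 2) \<le> 4 * real (n div 2)" by (rule less)
    have "real (2 * (n div 2)) \<le> real n" by (intro of_nat_mono) simp
    then have a: "4 * real (n div 2) \<le> 2 * real n" by simp
    have b: "real n * ln 2 \<le> real n" using ln_2_less_1 by (intro mult_left_le) auto
    have c: "ln (real n + 1) \<le> real n" using ln_le_minus_one[of "real n + 1"] by simp
    show ?thesis using psi_step[of n] IH a b c by linarith
  qed
qed

definition Af :: "(nat \<Rightarrow> complex) \<Rightarrow> nat \<Rightarrow> complex" where
  "Af a n = (\<Sum>k=1..n. a k * of_nat (n div k))"
definition Sf :: "(nat \<Rightarrow> complex) \<Rightarrow> nat \<Rightarrow> complex" where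
  "Sf a n = (\<Sum>k=1..n. a k * of_nat (n div k) * of_real (ln (real k)))"
definition Tf :: "(nat \<Rightarrow> complex) \<Rightarrow> nat \<Rightarrow> complex" where
  "Tf a n = (\<Sum>k=1..n. \<Sum>j=1..n div k. a k * of_real (ln (real (k*j))))"
definition Uf :: "(nat \<Rightarrow> complex) \<Rightarrow> nat \<Rightarrow> complex" where
  "Uf a n = (\<Sum>k=1..n. \<Sum>j=1..n div k. a k * of_real (ln (real j)))"

lemma Af_double: "Af a n = (\<Sum>k=1..n. \<Sum>j=1..n div k. a k)"
  unfolding Af_def by (rule sum.cong[OF refl]) (simp add: mult.commute)

lemma Af_Suc: "Af a (Suc n) = Af a n + (\<Sum>k\<in>{k. k dvd Suc n}. a k)"
  unfolding Af_double by (rule L1)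

lemma ST: "Sf a n = Tf a n - Uf a n"
proof -
  have "Tf a n - Uf a n = (\<Sum>k=1..n. \<Sum>j=1..n div k. a k * of_real (ln (real (k*j))) - a k * of_real (ln (real j)))"
    unfolding Tf_def Uf_def sum_subtractf ..
  also have "\<dots> = (\<Sum>k=1..n. \<Sum>j=1..n div k. a k * of_real (ln (real k)))"
  proof (intro sum.cong refl)
    fix k j assume k: "k \<in> {1..n}" and j: "j \<in> {1..n div k}"
    have "ln (real (k*j)) = ln (real k) + ln (real j)"
      using k j by (simp add: ln_mult)
    then show "a k * of_real (ln (real (k*j))) - a k * of_real (ln (real j)) = a k * of_real (ln (real k))"
      by (simp add: algebra_simps)
  qed
  also have "\<dots> = Sf a n"
    unfolding Sf_def by (rule sum.cong[OF refl]) (simp add: mult_ac)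
  finally show ?thesis ..
qed

lemma T_formula:
  "Tf a n = of_real (ln (real n)) * Af a n - (\<Sum>m<n. of_real (ln (real m + 1) - ln (real m)) * Af a m)"
proof (induction n)
  case 0 then show ?case by (simp add: Tf_def Af_def)
next
  case (Suc n)
  have inc: "(\<Sum>k\<in>{k. k dvd Suc n}. a k * of_real (ln (real (k * (Suc n div k)))))
      = of_real (ln (real (Suc n))) * (\<Sum>k\<in>{k. k dvd Suc n}. a k)"
    unfolding sum_distrib_left by (rule sum.cong[OF refl]) (simp add: mult.commute)
  have "Tf a (Suc n) = Tf a n + of_real (ln (real (Suc n))) * (\<Sum>k\<in>{k. k dvd Suc n}. a k)"
    unfolding Tf_def L1 inc ..
  also have "(\<Sum>k\<in>{k. k dvd Suc n}. a k) = Af a (Suc n) - Af a n"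
    by (simp add: Af_Suc)
  finally show ?case unfolding Suc by (simp add: algebra_simps)
qed

lemma U_formula: "Uf a n = (\<Sum>d=1..n. of_real (mangoldt d) * Af a (n div d))"
proof -
  have "Uf a n = (\<Sum>k=1..n. a k * of_real (LF (n div k)))"
    unfolding Uf_def LF_def by (simp add: sum_distrib_left)
  also have "\<dots> = (\<Sum>k=1..n. \<Sum>d=1..n div k. a k * of_real (mangoldt d) * of_nat (n div d div k))"
  proof (rule sum.cong[OF refl])
    fix k
    have "a k * of_real (LF (n div k)) = a k * of_real (\<Sum>d=1..n div k. mangoldt d * real (n div k div d))"
      by (simp only: cheb_id)
    also have "\<dots> = (\<Sum>d=1..n div k. a k * of_real (mangoldt d) * of_nat (n div d div k))"
      by (simp add: sum_distrib_left div_mult2_eq[symmetric] mult_ac)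
    finally show "a k * of_real (LF (n div k)) = \<dots>" .
  qed
  also have "\<dots> = (\<Sum>d=1..n. \<Sum>k=1..n div d. a k * of_real (mangoldt d) * of_nat (n div d div k))"
    by (rule sum_swap_div)
  also have "\<dots> = (\<Sum>d=1..n. of_real (mangoldt d) * Af a (n div d))"
    unfolding Af_def by (simp add: sum_distrib_left mult_ac)
  finally show ?thesis .
qed

lemma ln_nat_nonneg: "0 \<le> ln (real n)"
  by (cases n) auto

lemma ln_diff_nonneg: "0 \<le> ln (real m + 1) - ln (real m)"
proof (cases m)
  case 0 then show ?thesis by simp
next
  case (Suc k) then show ?thesis by simp
qed

lemma ln_diff_mult_le: "(ln (real m + 1) - ln (real m)) * real m \<le> 1"
proof (cases "m = 0")
  case True then show ?thesis by simp
next
  case False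
  then have mpos: "real m > 0" by simp
  have "ln (real m + 1) - ln (real m) = ln ((real m + 1) / real m)"
    using mpos by (simp add: ln_div)
  also have "\<dots> \<le> (real m + 1) / real m - 1"
    using mpos by (intro ln_le_minus_one) auto
  also have "\<dots> = 1 / real m" using mpos by (simp add: field_simps)
  finally have "(ln (real m + 1) - ln (real m)) * real m \<le> 1 / real m * real m"
    using mpos by (intro mult_right_mono) auto
  then show ?thesis using mpos by simp
qed

lemma T_bound:
  assumes eps: "eps \<ge> 0" and hA: "\<And>m. norm (Af a m) \<le> eps * real m + K"
  shows "norm (Tf a n) \<le> ln (real n) * (eps * real n + K) + eps * real n + K * ln (real n)"
proof -
  define d where "d m = ln (real m + 1) - ln (real m)" for m
  have dnn: "d m \<ge> 0" for m unfolding d_def by (rule ln_diff_nonneg)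
  have "norm (Tf a n) \<le> norm (of_real (ln (real n)) * Af a n) + norm (\<Sum>m<n. of_real (d m) * Af a m)"
    unfolding T_formula d_def by (rule norm_triangle_ineq4)
  also have "norm (of_real (ln (real n)) * Af a n) \<le> ln (real n) * (eps * real n + K)"
    using ln_nat_nonneg[of n] hA[of n] by (simp add: norm_mult mult_left_mono)
  also have "norm (\<Sum>m<n. of_real (d m) * Af a m) \<le> (\<Sum>m<n. d m * (eps * real m + K))"
  proof -
    have "norm (\<Sum>m<n. of_real (d m) * Af a m) \<le> (\<Sum>m<n. norm (of_real (d m) * Af a m))"
      by (rule norm_sum)
    also have "\<dots> \<le> (\<Sum>m<n. d m * (eps * real m + K))"
    proof (rule sum_mono)
      fix m
      show "norm (of_real (d m) * Af a m) \<le> d m * (eps * real m + K)"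
        using dnn[of m] hA[of m] by (simp add: norm_mult mult_left_mono)
    qed
    finally show ?thesis .
  qed
  also have "(\<Sum>m<n. d m * (eps * real m + K)) = eps * (\<Sum>m<n. d m * real m) + K * (\<Sum>m<n. d m)"
    by (simp add: sum.distrib sum_distrib_left algebra_simps)
  also have "(\<Sum>m<n. d m) = ln (real n)"
  proof -
    have "(\<Sum>m<n. d m) = (\<Sum>m<n. ln (real (Suc m)) - ln (real m))"
      unfolding d_def by (simp add: add.commute)
    also have "\<dots> = ln (real n) - ln (real 0)" by (rule sum_lessThan_telescope)
    finally show ?thesis by simp
  qed
  also have "eps * (\<Sum>m<n. d m * real m) \<le> eps * real n"
  proof (rule mult_left_mono[OF _ eps])
    have "(\<Sum>m<n. d m * real m) \<le> real (card {..<n}) * 1"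
      by (rule sum_bounded_above) (simp add: d_def ln_diff_mult_le)
    then show "(\<Sum>m<n. d m * real m) \<le> real n" by simp
  qed
  finally show ?thesis by simp
qed

lemma U_bound:
  assumes eps: "eps \<ge> 0" and K: "K \<ge> 0" and hA: "\<And>m. norm (Af a m) \<le> eps * real m + K"
  shows "norm (Uf a n) \<le> eps * (real n * ln (real n)) + K * (4 * real n)"
proof -
  have "norm (Uf a n) \<le> (\<Sum>d=1..n. norm (of_real (mangoldt d) * Af a (n div d)))"
    unfolding U_formula by (rule norm_sum)
  also have "\<dots> \<le> (\<Sum>d=1..n. mangoldt d * (eps * real (n div d) + K))"
  proof (rule sum_mono)
    fix d
    have "norm (of_real (mangoldt d) * Af a (n div d)) = mangoldt d * norm (Af a (n div d))"
      by (simp add: norm_mult mangoldt_nonneg)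
    also have "\<dots> \<le> mangoldt d * (eps * real (n div d) + K)"
      by (intro mult_left_mono hA mangoldt_nonneg)
    finally show "norm (of_real (mangoldt d) * Af a (n div d)) \<le> \<dots>" .
  qed
  also have "\<dots> = eps * (\<Sum>d=1..n. mangoldt d * real (n div d)) + K * psi n"
    by (simp add: psi_def sum.distrib sum_distrib_left algebra_simps)
  also have "\<dots> = eps * LF n + K * psi n" by (simp only: cheb_id)
  also have "\<dots> \<le> eps * (real n * ln (real n)) + K * (4 * real n)"
    by (intro add_mono mult_left_mono LF_le psi_bound eps K)
  finally show ?thesis .
qed

lemma S_bound:
  assumes eps: "eps \<ge> 0" and hA: "\<And>m. norm (Af a m) \<le> eps * real m + K"
  shows "norm (Sf a n) \<le> 2 * eps * (real n * ln (real n)) + (eps + 6 * K) * real n"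
proof -
  have K: "K \<ge> 0" using hA[of 0] by (simp add: Af_def)
  have lnn: "ln (real n) \<le> real n"
  proof (cases n)
    case 0 then show ?thesis by simp
  next
    case (Suc k)
    then show ?thesis using ln_le_minus_one[of "real n"] by simp
  qed
  have "norm (Sf a n) \<le> norm (Tf a n) + norm (Uf a n)"
    unfolding ST by (rule norm_triangle_ineq4)
  also have "\<dots> \<le> (ln (real n) * (eps * real n + K) + eps * real n + K * ln (real n))
     + (eps * (real n * ln (real n)) + K * (4 * real n))"
    by (intro add_mono T_bound U_bound eps K hA)
  also have "\<dots> = 2 * eps * (real n * ln (real n)) + eps * real n + 2 * K * ln (real n) + 4 * K * real n"
    by (simp add: algebra_simps)
  also have "\<dots> \<le> 2 * eps * (real n * ln (real n)) + eps * real n + 2 * K * real n + 4 * K * real n"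
    using lnn K by (intro add_mono order.refl mult_left_mono) auto
  finally show ?thesis by (simp add: algebra_simps)
qed

theorem lemma4:
  fixes a :: "nat \<Rightarrow> complex" and C :: complex
  assumes "(\<lambda>n::nat. (\<Sum>k=1..n. a k * of_nat (n div k)) - C * of_nat n)
             \<in> o(\<lambda>n. of_nat n)"
  shows "(\<lambda>n::nat. \<Sum>k=1..n. a k * of_nat (n div k) * of_real (ln (real k)))
           \<in> o(\<lambda>n. of_real (real n * ln (real n)))"
proof -
  define b where "b k = a k - (if k = 1 then C else 0)" for k
  have Ab: "Af b n = (\<Sum>k=1..n. a k * of_nat (n div k)) - C * of_nat n" for n
  proof (cases "n = 0")
    case True then show ?thesis by (simp add: Af_def)
  next
    case False
    have "Af b n = (\<Sum>k=1..n. a k * of_nat (n div k)) - (\<Sum>k\<in>{1..n}. if k = 1 then C * of_nat (n div k) else 0)"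
      unfolding Af_def b_def sum_subtractf[symmetric] by (rule sum.cong[OF refl]) (simp add: algebra_simps)
    also have "(\<Sum>k\<in>{1..n}. if k = 1 then C * of_nat (n div k) else 0) = C * of_nat n"
      using False by (subst sum.delta) auto
    finally show ?thesis .
  qed
  have Sb: "Sf b n = (\<Sum>k=1..n. a k * of_nat (n div k) * of_real (ln (real k)))" for n
    unfolding Sf_def b_def by (rule sum.cong[OF refl]) (auto simp: algebra_simps)
  show ?thesis
  proof (rule landau_o.smallI)
    fix c :: real assume c: "c > 0"
    define eps where "eps = c / 4"
    have eps: "eps > 0" using c by (simp add: eps_def)
    have "eventually (\<lambda>n. norm ((\<Sum>k=1..n. a k * of_nat (n div k)) - C * of_nat n)
            \<le> eps * norm (of_nat n :: complex)) at_top"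
      by (rule landau_o.smallD[OF assms eps])
    then obtain N where N: "\<And>n. n \<ge> N \<Longrightarrow> norm (Af b n) \<le> eps * real n"
      unfolding eventually_at_top_linorder Ab[symmetric] by auto
    define K where "K = (\<Sum>m<N. norm (Af b m))"
    have K: "K \<ge> 0" unfolding K_def by (intro sum_nonneg) auto
    have hA: "norm (Af b m) \<le> eps * real m + K" for m
    proof (cases "m \<ge> N")
      case True then show ?thesis using N[of m] K by simp
    next
      case False
      then have "norm (Af b m) \<le> K" unfolding K_def
        by (intro member_le_sum) auto
      moreover have "eps * real m \<ge> 0" using eps by simp
      ultimately show ?thesis by linarith
    qed
    define M where "M = 2 * (eps + 6 * K) / c"
    define N2 where "N2 = max 1 (nat \<lceil>exp M\<rceil>)"
    show "eventually (\<lambda>n. norm (\<Sum>k=1..n. a k * of_nat (n div k) * of_real (ln (real k)))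
            \<le> c * norm (of_real (real n * ln (real n)) :: complex)) at_top"
      unfolding eventually_at_top_linorder
    proof (intro exI allI impI)
      fix n assume n: "n \<ge> N2"
      then have n1: "n \<ge> 1" by (simp add: N2_def)
      have "exp M \<le> real n" using n unfolding N2_def by linarith
      then have lnM: "M \<le> ln (real n)"
        by (metis exp_gt_zero ln_exp ln_le_cancel_iff order_less_le_trans)
      have lnn: "ln (real n) \<ge> 0" by (rule ln_nat_nonneg)
      have "(eps + 6 * K) * real n = (c / 2) * M * real n"
        using c by (simp add: M_def)
      also have "\<dots> \<le> (c / 2) * ln (real n) * real n"
        using c lnM by (intro mult_right_mono mult_left_mono) auto
      finally have r: "(eps + 6 * K) * real n \<le> (c / 2) * (real n * ln (real n))"
        by (simp add: mult_ac)
      have "norm (\<Sum>k=1..n. a k * of_nat (n div k) * of_real (ln (real k))) = norm (Sf b n)"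
        by (simp add: Sb)
      also have "\<dots> \<le> 2 * eps * (real n * ln (real n)) + (eps + 6 * K) * real n"
        by (rule S_bound) (use eps hA in auto)
      also have "\<dots> \<le> c * (real n * ln (real n))"
        using r by (simp add: eps_def)
      also have "\<dots> = c * norm (of_real (real n * ln (real n)) :: complex)"
        by (simp only: norm_of_real, simp add: lnn)
      finally show "norm (\<Sum>k=1..n. a k * of_nat (n div k) * of_real (ln (real k)))
            \<le> c * norm (of_real (real n * ln (real n)) :: complex)" .
    qed
  qed
qed

end
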